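(* The RMMS is feasible for monotone valuations: for every set $M$ of items, every $n\ge1$, and every $n$ normalized monotone valuations $v_1,\dots,v_n$ on $M$, there exists an allocation $A_1,\dots,A_n$ (a partition of $M$) with $v_i(A_i)\ge \mathrm{RMMS}(M,v_i,n)$ for every $i$.
   Context: Items: a finite set $M$; there are $n$ agents $a_1,\dots,a_n$, agent $a_i$ having valuation $v_i$. A valuation is a function $v:2^M\to\mathbb{R}$ that is normalized ($v(\emptyset)=0$) and monotone ($v(S)\le v(T)$ whenever $S\subseteq T$). An allocation is a partition $A_1,\dots,A_n$ of $M$ (parts may be empty). Residual maximin share: $\mathrm{RMMS}(M,v,n)$ is the largest real $t$ with the following property: for every $0\le k<n$ and every $k$ pairwise disjoint bundles $B_1,\dots,B_k\subseteq M$ with $v(B_j)<t$ for all $j$, the set $M\setminus(B_1\cup\dots\cup B_k)$ can be partitioned into $n-k$ bundles each of value (under $v$) at least $t$. *)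

theory Defs
  imports Main "HOL.Real"
begin

definition valuation :: "'a set \<Rightarrow> ('a set \<Rightarrow> real) \<Rightarrow> bool" where
  "valuation M v \<longleftrightarrow> v {} = 0 \<and> (\<forall>S T. S \<subseteq> T \<longrightarrow> T \<subseteq> M \<longrightarrow> v S \<le> v T)"

definition is_partition :: "'a set \<Rightarrow> nat \<Rightarrow> (nat \<Rightarrow> 'a set) \<Rightarrow> bool" where
  "is_partition S m C \<longleftrightarrow> (\<Union>i<m. C i) = S \<and> (\<forall>i<m. \<forall>j<m. i \<noteq> j \<longrightarrow> C i \<inter> C j = {})"

definition rmms_prop :: "'a set \<Rightarrow> ('a set \<Rightarrow> real) \<Rightarrow> nat \<Rightarrow> real \<Rightarrow> bool" where
  "rmms_prop M v n t \<longleftrightarrow>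
     (\<forall>k<n. \<forall>B :: nat \<Rightarrow> 'a set.
        (\<forall>j<k. B j \<subseteq> M \<and> v (B j) < t) \<and> (\<forall>i<k. \<forall>j<k. i \<noteq> j \<longrightarrow> B i \<inter> B j = {})
        \<longrightarrow> (\<exists>C. is_partition (M - (\<Union>j<k. B j)) (n - k) C \<and> (\<forall>i<n - k. t \<le> v (C i))))"

definition RMMS :: "'a set \<Rightarrow> ('a set \<Rightarrow> real) \<Rightarrow> nat \<Rightarrow> real" where
  "RMMS M v n = (GREATEST t. rmms_prop M v n t)"

end

theory Submission
  imports Defs
begin
lemma hall:
  "finite I \<Longrightarrow> (\<forall>i\<in>I. finite (A i)) \<Longrightarrow> (\<forall>J\<subseteq>I. card J \<le> card (\<Union>(A ` J)))
   \<Longrightarrow> \<exists>f. inj_on f I \<and> (\<forall>i\<in>I. f i \<in> A i)"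
proof (induction "card I" arbitrary: I A rule: less_induct)
  case less
  note fin = less.prems(1) and finA = less.prems(2) and H = less.prems(3)
  show ?case
  proof (cases "I = {}")
    case True then show ?thesis by auto
  next
    case nonempty: False
    show ?thesis
    proof (cases "\<exists>J. J \<subseteq> I \<and> J \<noteq> {} \<and> J \<noteq> I \<and> card (\<Union>(A ` J)) \<le> card J")
      case True
      then obtain J where J: "J \<subseteq> I" "J \<noteq> {}" "J \<noteq> I" "card (\<Union>(A ` J)) \<le> card J" by blast
      have finJ: "finite J" using J fin finite_subset by blast
      have "card J < card I" using J fin by (simp add: psubset_card_mono psubsetI)
      then obtain f1 where f1: "inj_on f1 J" "\<forall>i\<in>J. f1 i \<in> A i"
        using less.hyps[of J A] finJ finA H J by blast
      define U where "U = \<Union>(A ` J)"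
      have finU: "finite U" unfolding U_def using finJ finA J by auto
      have "card J \<le> card U" using H J(1) unfolding U_def by blast
      then have cU: "card U = card J" using J(4) unfolding U_def by linarith
      define A' where "A' = (\<lambda>i. A i - U)"
      have "card (I - J) = card I - card J" using finJ J(1) by (simp add: card_Diff_subset)
      moreover have "card J > 0" using finJ J(2) by auto
      ultimately have "card (I - J) < card I" using \<open>card J < card I\<close> by linarith
      moreover have "\<forall>K\<subseteq>I - J. card K \<le> card (\<Union>(A' ` K))"
      proof (intro allI impI)
        fix K assume K: "K \<subseteq> I - J"
        have finK: "finite K" using K fin finite_subset by blast
        have e: "\<Union>(A' ` K) = \<Union>(A ` (K \<union> J)) - U" unfolding A'_def U_def by auto
        have sub: "U \<subseteq> \<Union>(A ` (K \<union> J))" unfolding U_def by auto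
        have finKJ: "finite (\<Union>(A ` (K \<union> J)))" using finK finJ finA K J by auto
        have "card (\<Union>(A' ` K)) = card (\<Union>(A ` (K \<union> J))) - card U"
          using e sub finU by (simp add: card_Diff_subset)
        moreover have "K \<union> J \<subseteq> I" using K J by auto
        then have "card (K \<union> J) \<le> card (\<Union>(A ` (K \<union> J)))" using H by blast
        moreover have "card (K \<union> J) = card K + card J" using K finK finJ
          by (subst card_Un_disjoint) auto
        ultimately show "card K \<le> card (\<Union>(A' ` K))" using cU by linarith
      qed
      moreover have "\<forall>i\<in>I - J. finite (A' i)" using finA A'_def by auto
      ultimately obtain f2 where f2: "inj_on f2 (I - J)" "\<forall>i\<in>I - J. f2 i \<in> A' i"
        using less.hyps[of "I - J" A'] fin by blast
      define f where "f = (\<lambda>i. if i \<in> J then f1 i else f2 i)"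
      have "inj_on f I"
        unfolding inj_on_def
      proof (intro ballI impI)
        fix x y assume xy: "x \<in> I" "y \<in> I" "f x = f y"
        show "x = y"
        proof (cases "x \<in> J"; cases "y \<in> J")
          assume "x \<in> J" "y \<in> J" then show ?thesis using xy f1 unfolding f_def inj_on_def by auto
        next
          assume a: "x \<in> J" "y \<notin> J"
          then have "f x \<in> U" using f1 U_def f_def by auto
          moreover have "f y \<notin> U" using a f2 xy A'_def f_def by auto
          ultimately show ?thesis using xy by auto
        next
          assume a: "x \<notin> J" "y \<in> J"
          then have "f y \<in> U" using f1 U_def f_def by auto
          moreover have "x \<in> I - J" using a xy by auto
          then have "f2 x \<notin> U" using f2(2) A'_def by auto
          then have "f x \<notin> U" using a f_def by auto
          ultimately show ?thesis using xy by auto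
        next
          assume "x \<notin> J" "y \<notin> J" then show ?thesis using xy f2 unfolding f_def inj_on_def by auto
        qed
      qed
      moreover have "\<forall>i\<in>I. f i \<in> A i" using f1 f2 A'_def f_def by auto
      ultimately show ?thesis by blast
    next
      case False
      then have strict: "\<And>J. J \<subseteq> I \<Longrightarrow> J \<noteq> {} \<Longrightarrow> J \<noteq> I \<Longrightarrow> card J < card (\<Union>(A ` J))"
        by (meson not_le)
      obtain i0 where i0: "i0 \<in> I" using nonempty by blast
      have "card {i0} \<le> card (A i0)" using H i0 by (metis empty_subsetI image_empty image_insert insert_subset cSup_singleton)
      then have "A i0 \<noteq> {}" by auto
      then obtain x where x: "x \<in> A i0" by blast
      define A' where "A' = (\<lambda>i. A i - {x})"
      have "card (I - {i0}) < card I" using i0 fin by (meson card_Diff1_less)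
      moreover have "\<forall>K\<subseteq>I - {i0}. card K \<le> card (\<Union>(A' ` K))"
      proof (intro allI impI)
        fix K assume K: "K \<subseteq> I - {i0}"
        show "card K \<le> card (\<Union>(A' ` K))"
        proof (cases "K = {}")
          case True then show ?thesis by simp
        next
          case False
          have finK: "finite K" using K fin finite_subset by blast
          have "K \<noteq> I" using K i0 by auto
          then have lt: "card K < card (\<Union>(A ` K))" using strict K False by auto
          have e: "\<Union>(A' ` K) = \<Union>(A ` K) - {x}" unfolding A'_def by auto
          have "card (\<Union>(A ` K)) - 1 \<le> card (\<Union>(A ` K) - {x})"
            using diff_card_le_card_Diff[of "{x}" "\<Union>(A ` K)"] by simp
          then show ?thesis using lt unfolding e by linarith
        qed
      qed
      moreover have "\<forall>i\<in>I - {i0}. finite (A' i)" using finA A'_def by auto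
      ultimately obtain f2 where f2: "inj_on f2 (I - {i0})" "\<forall>i\<in>I - {i0}. f2 i \<in> A' i"
        using less.hyps[of "I - {i0}" A'] fin by blast
      define f where "f = f2(i0 := x)"
      have "inj_on f I"
        unfolding inj_on_def
      proof (intro ballI impI)
        fix a b assume ab: "a \<in> I" "b \<in> I" "f a = f b"
        show "a = b"
        proof (cases "a = i0"; cases "b = i0")
          assume "a \<noteq> i0" "b \<noteq> i0" then show ?thesis using ab f2 unfolding f_def inj_on_def by auto
        qed (use ab f2 A'_def f_def in auto)
      qed
      moreover have "\<forall>i\<in>I. f i \<in> A i" using f2 x A'_def f_def by auto
      ultimately show ?thesis by blast
    qed
  qed
qed

lemma efm:
  "finite P \<Longrightarrow> finite Q \<Longrightarrow> a \<in> P \<Longrightarrow> card P \<le> card Q \<Longrightarrow> A a = Q \<Longrightarrow> (\<forall>p\<in>P. A p \<subseteq> Q)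
   \<Longrightarrow> \<exists>Y f. Y \<subseteq> P \<and> Y \<noteq> {} \<and> inj_on f Y \<and> (\<forall>y\<in>Y. f y \<in> A y) \<and> (\<forall>p\<in>P - Y. \<forall>y\<in>Y. f y \<notin> A p)"
proof (induction "card P" arbitrary: P Q A rule: less_induct)
  case less
  note finP = less.prems(1) and finQ = less.prems(2) and aP = less.prems(3) and cPQ = less.prems(4)
    and Aa = less.prems(5) and AQ = less.prems(6)
  show ?case
  proof (cases "\<forall>J\<subseteq>P. card J \<le> card (\<Union>(A ` J))")
    case True
    moreover have "\<forall>p\<in>P. finite (A p)" using AQ finQ finite_subset by blast
    ultimately obtain f where "inj_on f P" "\<forall>i\<in>P. f i \<in> A i" using hall[of P A] finP by blast
    then show ?thesis using aP by blast
  next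
    case False
    then obtain J where J: "J \<subseteq> P" "card (\<Union>(A ` J)) < card J" by (meson not_le)
    define U where "U = \<Union>(A ` J)"
    have UQ: "U \<subseteq> Q" using AQ J(1) U_def by auto
    have finJ: "finite J" using J(1) finP finite_subset by blast
    have "a \<notin> J"
    proof
      assume "a \<in> J"
      then have "Q \<subseteq> U" using Aa U_def by auto
      then have "U = Q" using UQ by auto
      moreover have "card J \<le> card P" using J(1) finP by (simp add: card_mono)
      moreover have "card U < card J" using J(2) U_def by simp
      ultimately show False using cPQ by simp
    qed
    have Jne: "J \<noteq> {}" using J(2) by auto
    define P' where "P' = P - J"
    define Q' where "Q' = Q - U"
    define A' where "A' = (\<lambda>p. A p - U)"
    have cP': "card P' = card P - card J" using P'_def finJ J(1) by (simp add: card_Diff_subset)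
    have cQ': "card Q' = card Q - card U" using Q'_def UQ finQ finite_subset by (metis card_Diff_subset)
    have cJP: "card J \<le> card P" using J(1) finP by (simp add: card_mono)
    have "card J > 0" using finJ Jne by auto
    then have lt: "card P' < card P" using cP' cJP by linarith
    have "card U < card J" using J(2) U_def by simp
    then have "card P' \<le> card Q'" using cP' cQ' cJP cPQ by linarith
    moreover have "finite P'" "finite Q'" using P'_def Q'_def finP finQ by auto
    moreover have "a \<in> P'" using aP \<open>a \<notin> J\<close> P'_def by auto
    moreover have "A' a = Q'" using Aa A'_def Q'_def by auto
    moreover have "\<forall>p\<in>P'. A' p \<subseteq> Q'" using AQ A'_def Q'_def P'_def by auto
    ultimately obtain Y f where Y: "Y \<subseteq> P'" "Y \<noteq> {}" "inj_on f Y" "\<forall>y\<in>Y. f y \<in> A' y"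
      "\<forall>p\<in>P' - Y. \<forall>y\<in>Y. f y \<notin> A' p"
      using less.hyps[OF lt, of Q' A'] by blast
    have "\<forall>p\<in>P - Y. \<forall>y\<in>Y. f y \<notin> A p"
    proof (intro ballI)
      fix p y assume p: "p \<in> P - Y" and y: "y \<in> Y"
      have fU: "f y \<notin> U" using Y(4) y A'_def by auto
      show "f y \<notin> A p"
      proof (cases "p \<in> J")
        case True
        then have "A p \<subseteq> U" using U_def by auto
        then show ?thesis using fU by auto
      next
        case False
        then have "p \<in> P' - Y" using p P'_def by auto
        then show ?thesis using Y(5) y fU A'_def by auto
      qed
    qed
    moreover have "Y \<subseteq> P" using Y(1) P'_def by auto
    moreover have "\<forall>y\<in>Y. f y \<in> A y" using Y(4) A'_def by auto
    ultimately show ?thesis using Y(2,3) by blast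
  qed
qed

lemma residual:
  assumes P: "rmms_prop R v k t" and D: "\<forall>i<d. D i \<subseteq> R \<and> v (D i) < t"
    and Dd: "\<forall>i<d. \<forall>j<d. i \<noteq> j \<longrightarrow> D i \<inter> D j = {}" and dk: "d \<le> k"
  shows "rmms_prop (R - (\<Union>i<d. D i)) v (k - d) t"
  unfolding rmms_prop_def
proof (intro allI impI)
  fix m B assume m: "m < k - d"
    and B: "(\<forall>j<m. B j \<subseteq> R - (\<Union>i<d. D i) \<and> v (B j) < t) \<and> (\<forall>i<m. \<forall>j<m. i \<noteq> j \<longrightarrow> B i \<inter> B j = {})"
  define B' where "B' = (\<lambda>j. if j < m then B j else D (j - m))"
  have "m + d < k" using m dk by linarith
  moreover have "\<forall>j<m + d. B' j \<subseteq> R \<and> v (B' j) < t"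
  proof (intro allI impI)
    fix j assume j: "j < m + d"
    show "B' j \<subseteq> R \<and> v (B' j) < t"
    proof (cases "j < m")
      case True then show ?thesis using B B'_def by auto
    next
      case False then have "j - m < d" using j by linarith
      then show ?thesis using D False B'_def by auto
    qed
  qed
  moreover have "\<forall>i<m + d. \<forall>j<m + d. i \<noteq> j \<longrightarrow> B' i \<inter> B' j = {}"
  proof (intro allI impI)
    fix i j assume ij: "i < m + d" "j < m + d" "i \<noteq> j"
    show "B' i \<inter> B' j = {}"
    proof (cases "i < m"; cases "j < m")
      assume "i < m" "j < m" then show ?thesis using B ij B'_def by auto
    next
      assume a: "i < m" "\<not> j < m"
      then have "j - m < d" using ij by linarith
      then have "D (j - m) \<subseteq> (\<Union>i<d. D i)" by auto
      then show ?thesis using a B B'_def by auto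
    next
      assume a: "\<not> i < m" "j < m"
      then have "i - m < d" using ij by linarith
      then have "D (i - m) \<subseteq> (\<Union>i<d. D i)" by auto
      then show ?thesis using a B B'_def by auto
    next
      assume a: "\<not> i < m" "\<not> j < m"
      then have "i - m < d" "j - m < d" "i - m \<noteq> j - m" using ij by linarith+
      then show ?thesis using a Dd B'_def by auto
    qed
  qed
  ultimately obtain C where C: "is_partition (R - (\<Union>j<m + d. B' j)) (k - (m + d)) C"
    "\<forall>i<k - (m + d). t \<le> v (C i)"
    using P unfolding rmms_prop_def by blast
  have U: "(\<Union>j<m + d. B' j) = (\<Union>j<m. B j) \<union> (\<Union>i<d. D i)"
  proof
    show "(\<Union>j<m + d. B' j) \<subseteq> (\<Union>j<m. B j) \<union> (\<Union>i<d. D i)"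
    proof
      fix x assume "x \<in> (\<Union>j<m + d. B' j)"
      then obtain j where j: "j < m + d" "x \<in> B' j" by auto
      show "x \<in> (\<Union>j<m. B j) \<union> (\<Union>i<d. D i)"
      proof (cases "j < m")
        case True then show ?thesis using j B'_def by auto
      next
        case False then have "j - m < d" using j by linarith
        then show ?thesis using j False B'_def by auto
      qed
    qed
  next
    show "(\<Union>j<m. B j) \<union> (\<Union>i<d. D i) \<subseteq> (\<Union>j<m + d. B' j)"
    proof
      fix x assume "x \<in> (\<Union>j<m. B j) \<union> (\<Union>i<d. D i)"
      then show "x \<in> (\<Union>j<m + d. B' j)"
      proof
        assume "x \<in> (\<Union>j<m. B j)"
        then obtain j where "j < m" "x \<in> B j" by auto
        then show ?thesis using B'_def by (intro UN_I[of j]) auto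
      next
        assume "x \<in> (\<Union>i<d. D i)"
        then obtain i where "i < d" "x \<in> D i" by auto
        then show ?thesis using B'_def by (intro UN_I[of "m + i"]) auto
      qed
    qed
  qed
  have e1: "R - (\<Union>j<m + d. B' j) = R - (\<Union>i<d. D i) - (\<Union>j<m. B j)" using U by auto
  have e2: "k - (m + d) = k - d - m" by simp
  show "\<exists>C. is_partition (R - (\<Union>i<d. D i) - (\<Union>j<m. B j)) (k - d - m) C \<and> (\<forall>i<k - d - m. t \<le> v (C i))"
    unfolding e1[symmetric] e2[symmetric] using C by blast
qed


lemma G:
  fixes v :: "nat \<Rightarrow> 'a set \<Rightarrow> real" and t :: "nat \<Rightarrow> real"
  shows "finite N \<Longrightarrow> N \<noteq> {} \<Longrightarrow> (\<forall>j\<in>N. rmms_prop R (v j) (card N) (t j))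
    \<Longrightarrow> \<exists>A. (\<Union>j\<in>N. A j) = R \<and> (\<forall>i\<in>N. \<forall>j\<in>N. i \<noteq> j \<longrightarrow> A i \<inter> A j = {}) \<and> (\<forall>j\<in>N. t j \<le> v j (A j))"
proof (induction "card N" arbitrary: N R rule: less_induct)
  case less
  note finN = less.prems(1) and Nne = less.prems(2) and PN = less.prems(3)
  define k where "k = card N"
  have k0: "0 < k" using finN Nne k_def by auto
  obtain a where aN: "a \<in> N" using Nne by blast
  have Pa: "rmms_prop R (v a) k (t a)" using PN aN k_def by auto
  have "\<exists>C. is_partition (R - (\<Union>j<(0::nat). {})) (k - 0) C \<and> (\<forall>i<k - 0. t a \<le> v a (C i))"
    using Pa[unfolded rmms_prop_def, rule_format, of 0 "\<lambda>_. {}"] k0 by simp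
  then obtain C where Cp: "is_partition R k C" and Ca: "\<forall>i<k. t a \<le> v a (C i)" by auto
  have CU: "(\<Union>i<k. C i) = R" and Cd: "\<forall>i<k. \<forall>j<k. i \<noteq> j \<longrightarrow> C i \<inter> C j = {}"
    using Cp unfolding is_partition_def by auto
  define Adj where "Adj = (\<lambda>j. {q\<in>{..<k}. t j \<le> v j (C q)})"
  have "Adj a = {..<k}" using Ca Adj_def by auto
  moreover have "\<forall>p\<in>N. Adj p \<subseteq> {..<k}" using Adj_def by auto
  moreover have "card N \<le> card {..<k}" using k_def by simp
  ultimately obtain Y f where Y: "Y \<subseteq> N" "Y \<noteq> {}" "inj_on f Y" "\<forall>y\<in>Y. f y \<in> Adj y"
      "\<forall>p\<in>N - Y. \<forall>y\<in>Y. f y \<notin> Adj p"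
    using efm[of N "{..<k}" a Adj] finN aN by blast
  have fk: "\<forall>y\<in>Y. f y < k" and fv: "\<forall>y\<in>Y. t y \<le> v y (C (f y))" using Y(4) Adj_def by auto
  have finY: "finite Y" using Y(1) finN finite_subset by blast
  have CfR: "\<forall>y\<in>Y. C (f y) \<subseteq> R" using fk CU by blast
  have Cfd: "\<forall>x\<in>Y. \<forall>y\<in>Y. x \<noteq> y \<longrightarrow> C (f x) \<inter> C (f y) = {}"
  proof (intro ballI impI)
    fix x y assume xy: "x \<in> Y" "y \<in> Y" "x \<noteq> y"
    then have "f x \<noteq> f y" using Y(3) unfolding inj_on_def by blast
    then show "C (f x) \<inter> C (f y) = {}" using Cd fk xy by blast
  qed
  show ?case
  proof (cases "Y = N")
    case True
    have "f ` N \<subseteq> {..<k}" using fk True by auto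
    moreover have "card (f ` N) = k" using Y(3) True k_def by (simp add: card_image)
    ultimately have fN: "f ` N = {..<k}" by (simp add: card_subset_eq)
    have "(\<Union>j\<in>N. C (f j)) = (\<Union>q\<in>f ` N. C q)" by simp
    then have "(\<Union>j\<in>N. C (f j)) = R" using CU fN by simp
    then show ?thesis using Cfd fv True by (intro exI[of _ "\<lambda>j. C (f j)"]) auto
  next
    case False
    define N' where "N' = N - Y"
    define d where "d = card Y"
    obtain h where h: "bij_betw h {0..<d} Y" using ex_bij_betw_nat_finite[OF finY] d_def by blast
    define D where "D = (\<lambda>i. C (f (h i)))"
    have hY: "\<forall>i<d. h i \<in> Y" using h bij_betwE by fastforce
    have DU: "(\<Union>i<d. D i) = (\<Union>y\<in>Y. C (f y))"
    proof -
      have "h ` {..<d} = Y" using h bij_betw_imp_surj_on atLeast0LessThan by metis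
      then show ?thesis unfolding D_def by auto
    qed
    define R' where "R' = R - (\<Union>y\<in>Y. C (f y))"
    have dk: "d \<le> k" using d_def k_def Y(1) finN by (simp add: card_mono)
    have cN': "card N' = k - d" using N'_def d_def k_def finY Y(1) by (simp add: card_Diff_subset)
    have N'ne: "N' \<noteq> {}" using N'_def False Y(1) by auto
    have "N' \<subset> N" using Y(1,2) unfolding N'_def by blast
    then have "card N' < card N" using finN by (simp add: psubset_card_mono)
    moreover have "finite N'" using N'_def finN by auto
    moreover have "\<forall>j\<in>N'. rmms_prop R' (v j) (card N') (t j)"
    proof
      fix p assume p: "p \<in> N'"
      have Pp: "rmms_prop R (v p) k (t p)" using PN p N'_def k_def by auto
      have "\<forall>i<d. D i \<subseteq> R \<and> v p (D i) < t p"
      proof (intro allI impI)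
        fix i assume i: "i < d"
        have "h i \<in> Y" using hY i by auto
        moreover have "f (h i) \<notin> Adj p" using Y(5) p N'_def \<open>h i \<in> Y\<close> by auto
        ultimately show "D i \<subseteq> R \<and> v p (D i) < t p" using fk CfR D_def Adj_def by auto
      qed
      moreover have "\<forall>i<d. \<forall>j<d. i \<noteq> j \<longrightarrow> D i \<inter> D j = {}"
      proof (intro allI impI)
        fix i j assume ij: "i < d" "j < d" "i \<noteq> j"
        then have "h i \<noteq> h j" using h unfolding bij_betw_def inj_on_def by auto
        then show "D i \<inter> D j = {}" using Cfd hY ij D_def by auto
      qed
      ultimately have "rmms_prop (R - (\<Union>i<d. D i)) (v p) (k - d) (t p)" using residual[OF Pp _ _ dk] by blast
      then show "rmms_prop R' (v p) (card N') (t p)" using DU R'_def cN' by simp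
    qed
    ultimately obtain A' where A': "(\<Union>j\<in>N'. A' j) = R'" "\<forall>i\<in>N'. \<forall>j\<in>N'. i \<noteq> j \<longrightarrow> A' i \<inter> A' j = {}"
      "\<forall>j\<in>N'. t j \<le> v j (A' j)"
      using less.hyps[of N' R'] N'ne by blast
    define A where "A = (\<lambda>j. if j \<in> Y then C (f j) else A' j)"
    have "(\<Union>j\<in>N. A j) = (\<Union>y\<in>Y. C (f y)) \<union> (\<Union>j\<in>N'. A' j)"
      using Y(1) N'_def A_def by auto
    also have "\<dots> = R" using A'(1) R'_def CfR by auto
    finally have "(\<Union>j\<in>N. A j) = R" .
    moreover have "\<forall>i\<in>N. \<forall>j\<in>N. i \<noteq> j \<longrightarrow> A i \<inter> A j = {}"
    proof (intro ballI impI)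
      fix i j assume ij: "i \<in> N" "j \<in> N" "i \<noteq> j"
      have sub: "\<And>x. x \<in> N' \<Longrightarrow> A' x \<subseteq> R'" using A'(1) by auto
      show "A i \<inter> A j = {}"
        using ij Cfd A'(2) sub[of i] sub[of j] R'_def N'_def A_def by (cases "i \<in> Y"; cases "j \<in> Y") auto
    qed
    moreover have "\<forall>j\<in>N. t j \<le> v j (A j)" using fv A'(3) A_def N'_def by auto
    ultimately show ?thesis by blast
  qed
qed

lemma rmms_max:
  assumes finM: "finite M" and n1: "n \<ge> 1" and val: "valuation M v"
  shows "rmms_prop M v n (RMMS M v n)"
proof -
  have v0: "v {} = 0" and mono: "\<And>S T. S \<subseteq> T \<Longrightarrow> T \<subseteq> M \<Longrightarrow> v S \<le> v T"
    using val unfolding valuation_def by auto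
  have nonneg: "\<And>S. S \<subseteq> M \<Longrightarrow> 0 \<le> v S" using mono[of "{}"] v0 by auto
  define V where "V = v ` Pow M"
  have finV: "finite V" using finM V_def by simp
  define T where "T = {x\<in>V. rmms_prop M v n x}"
  have P0: "rmms_prop M v n 0"
    unfolding rmms_prop_def
  proof (intro allI impI)
    fix k B assume k: "k < n" and B: "(\<forall>j<k. B j \<subseteq> M \<and> v (B j) < 0) \<and> (\<forall>i<k. \<forall>j<k. i \<noteq> j \<longrightarrow> B i \<inter> B j = {})"
    have "k = 0"
    proof (rule ccontr)
      assume "k \<noteq> 0"
      then have "B 0 \<subseteq> M" "v (B 0) < 0" using B by auto
      then show False using nonneg[of "B 0"] by linarith
    qed
    define C where "C = (\<lambda>i::nat. if i = 0 then M else {})"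
    have "(\<Union>i<n. C i) \<subseteq> M" unfolding C_def by auto
    moreover have "M \<subseteq> (\<Union>i<n. C i)" using n1 unfolding C_def by (intro subsetI UN_I[of 0]) auto
    ultimately have "(\<Union>i<n. C i) = M" by (rule equalityI)
    moreover have "\<forall>i<n. \<forall>j<n. i \<noteq> j \<longrightarrow> C i \<inter> C j = {}" using C_def by auto
    moreover have "\<forall>i<n. 0 \<le> v (C i)" using C_def nonneg by auto
    ultimately show "\<exists>C. is_partition (M - (\<Union>j<k. B j)) (n - k) C \<and> (\<forall>i<n - k. 0 \<le> v (C i))"
      using \<open>k = 0\<close> unfolding is_partition_def by (intro exI[of _ C]) auto
  qed
  have "0 \<in> V" using v0 V_def by force
  then have T0: "0 \<in> T" using P0 T_def by auto
  have finT: "finite T" using finV T_def by auto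
  define s where "s = Max T"
  have sT: "s \<in> T" using finT T0 unfolding s_def by (intro Max_in) auto
  have ub: "\<forall>t. rmms_prop M v n t \<longrightarrow> t \<le> s"
  proof (intro allI impI)
    fix t assume Pt: "rmms_prop M v n t"
    have n0: "(0::nat) < n" using n1 by simp
    have "\<exists>C. is_partition (M - (\<Union>j<(0::nat). {})) (n - 0) C \<and> (\<forall>i<n - 0. t \<le> v (C i))"
      using Pt[unfolded rmms_prop_def, rule_format, of 0 "\<lambda>_. {}"] n0 by simp
    then obtain C where "is_partition M n C" "\<forall>i<n. t \<le> v (C i)" by auto
    then have "C 0 \<subseteq> M" "t \<le> v (C 0)" using n1 unfolding is_partition_def by auto
    then have "v (C 0) \<in> {x\<in>V. t \<le> x}" using V_def by auto
    define W where "W = {x\<in>V. t \<le> x}"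
    have Wne: "W \<noteq> {}" and finW: "finite W" using \<open>v (C 0) \<in> {x\<in>V. t \<le> x}\<close> W_def finV by auto
    define s' where "s' = Min W"
    have s'W: "s' \<in> W" using Wne finW s'_def by auto
    have s'min: "\<And>x. x \<in> W \<Longrightarrow> s' \<le> x" using finW s'_def by auto
    have "rmms_prop M v n s'"
      unfolding rmms_prop_def
    proof (intro allI impI)
      fix k B assume k: "k < n" and B: "(\<forall>j<k. B j \<subseteq> M \<and> v (B j) < s') \<and> (\<forall>i<k. \<forall>j<k. i \<noteq> j \<longrightarrow> B i \<inter> B j = {})"
      have "\<forall>j<k. B j \<subseteq> M \<and> v (B j) < t"
      proof (intro allI impI)
        fix j assume j: "j < k"
        then have "B j \<subseteq> M" "v (B j) < s'" using B by auto
        moreover have "v (B j) \<in> V" using \<open>B j \<subseteq> M\<close> V_def by auto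
        moreover have "\<not> t \<le> v (B j)"
        proof
          assume "t \<le> v (B j)"
          then have "v (B j) \<in> W" using \<open>v (B j) \<in> V\<close> W_def by simp
          then show False using s'min[of "v (B j)"] \<open>v (B j) < s'\<close> by linarith
        qed
        ultimately show "B j \<subseteq> M \<and> v (B j) < t" by simp
      qed
      then have Bt: "(\<forall>j<k. B j \<subseteq> M \<and> v (B j) < t) \<and> (\<forall>i<k. \<forall>j<k. i \<noteq> j \<longrightarrow> B i \<inter> B j = {})"
        using B by simp
      have "\<exists>C. is_partition (M - (\<Union>j<k. B j)) (n - k) C \<and> (\<forall>i<n - k. t \<le> v (C i))"
        by (rule Pt[unfolded rmms_prop_def, rule_format, of k B]) (use k Bt in auto)
      then obtain C where C: "is_partition (M - (\<Union>j<k. B j)) (n - k) C" "\<forall>i<n - k. t \<le> v (C i)"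
        by blast
      have "\<forall>i<n - k. s' \<le> v (C i)"
      proof (intro allI impI)
        fix i assume i: "i < n - k"
        then have "C i \<subseteq> M" using C(1) unfolding is_partition_def by auto
        then have "v (C i) \<in> W" using C(2) i V_def W_def by auto
        then show "s' \<le> v (C i)" using s'min by auto
      qed
      then show "\<exists>C. is_partition (M - (\<Union>j<k. B j)) (n - k) C \<and> (\<forall>i<n - k. s' \<le> v (C i))"
        using C by blast
    qed
    then have "s' \<in> T" using s'W W_def T_def by auto
    then have "s' \<le> s" using finT s_def by auto
    moreover have "t \<le> s'" using s'W W_def by auto
    ultimately show "t \<le> s" by linarith
  qed
  have "RMMS M v n = s" unfolding RMMS_def
    using sT T_def ub by (intro Greatest_equality) auto
  then show ?thesis using sT T_def by auto
qed

theorem mainTheorem2: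
  fixes M :: "'a set" and n :: nat and v :: "nat \<Rightarrow> 'a set \<Rightarrow> real"
  assumes "finite M" and "n \<ge> 1"
    and "\<forall>i<n. valuation M (v i)"
  shows "\<exists>A :: nat \<Rightarrow> 'a set. is_partition M n A \<and> (\<forall>i<n. RMMS M (v i) n \<le> v i (A i))"
proof -
  have "\<forall>j\<in>{..<n}. rmms_prop M (v j) (card {..<n}) (RMMS M (v j) n)"
    using rmms_max assms by auto
  moreover have "{..<n} \<noteq> {}" using assms(2) by (simp add: lessThan_empty_iff)
  ultimately have "\<exists>A. (\<Union>j\<in>{..<n}. A j) = M \<and> (\<forall>i\<in>{..<n}. \<forall>j\<in>{..<n}. i \<noteq> j \<longrightarrow> A i \<inter> A j = {})
    \<and> (\<forall>j\<in>{..<n}. RMMS M (v j) n \<le> v j (A j))"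
    by (intro G) auto
  then obtain A where "(\<Union>j\<in>{..<n}. A j) = M" "\<forall>i\<in>{..<n}. \<forall>j\<in>{..<n}. i \<noteq> j \<longrightarrow> A i \<inter> A j = {}"
    "\<forall>j\<in>{..<n}. RMMS M (v j) n \<le> v j (A j)" by blast
  then show ?thesis unfolding is_partition_def by (intro exI[of _ A]) (simp add: lessThan_iff)
qed

end
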